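(* There is a constant $c>0$ such that the following holds for every $k\ge1$. Let $G$ be the graph obtained from a complete binary tree of depth $k$ (root $x$, $2^k$ leaves) by adding the edges of an arbitrary $3$-regular graph on the vertex set of the $2^k$ leaves. Consider simple random walk on $G$, with stationary measure $\pi(v)=\deg(v)/\sum_w\deg(w)$, and let $S$ consist of the $2^k$ leaves together with the root $x$. Then $$h_S(x)\ge \frac{ck}{|S|}.$$
   Context: For simple random walk $(X_t)$ on $G$ and $A\subset G$, $T_A=\inf\{t\ge0:X_t\in A\}$. The harmonic measure on $S$ from $y$ is $h_{y,S}(z)=\Pr_y[X_{T_S}=z]$ and the harmonic measure from stationarity is $h_S(z)=\sum_y\pi(y)h_{y,S}(z)$. *)

theory Defs
  imports Complex_Main
begin

definition deg :: "'a set \<Rightarrow> ('a \<Rightarrow> 'a \<Rightarrow> bool) \<Rightarrow> 'a \<Rightarrow> nat" where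
  "deg V adj v = card {w \<in> V. adj v w}"

definition trans_prob :: "'a set \<Rightarrow> ('a \<Rightarrow> 'a \<Rightarrow> bool) \<Rightarrow> 'a \<Rightarrow> 'a \<Rightarrow> real" where
  "trans_prob V adj u v = (if v \<in> V \<and> adj u v then 1 / real (deg V adj u) else 0)"

text \<open>hit_at V adj n S y z = Pr_y[T_S = n and X_n = z], where T_S = inf{t \<ge> 0. X_t \<in> S}.\<close>
fun hit_at :: "'a set \<Rightarrow> ('a \<Rightarrow> 'a \<Rightarrow> bool) \<Rightarrow> nat \<Rightarrow> 'a set \<Rightarrow> 'a \<Rightarrow> 'a \<Rightarrow> real" where
  "hit_at V adj 0 S y z = (if y \<in> S \<and> y = z then 1 else 0)"
| "hit_at V adj (Suc n) S y z =
     (if y \<in> S then 0 else (\<Sum>w\<in>V. trans_prob V adj y w * hit_at V adj n S w z))"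

text \<open>Harmonic measure on S from y: h_{y,S}(z) = Pr_y[X_{T_S} = z] = sum over n of Pr_y[T_S = n, X_n = z].\<close>
definition harmonic_from :: "'a set \<Rightarrow> ('a \<Rightarrow> 'a \<Rightarrow> bool) \<Rightarrow> 'a set \<Rightarrow> 'a \<Rightarrow> 'a \<Rightarrow> real" where
  "harmonic_from V adj S y z = (\<Sum>n. hit_at V adj n S y z)"

definition stationary :: "'a set \<Rightarrow> ('a \<Rightarrow> 'a \<Rightarrow> bool) \<Rightarrow> 'a \<Rightarrow> real" where
  "stationary V adj v = real (deg V adj v) / (\<Sum>w\<in>V. real (deg V adj w))"

definition harmonic_stat :: "'a set \<Rightarrow> ('a \<Rightarrow> 'a \<Rightarrow> bool) \<Rightarrow> 'a set \<Rightarrow> 'a \<Rightarrow> real" where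
  "harmonic_stat V adj S z = (\<Sum>y\<in>V. stationary V adj y * harmonic_from V adj S y z)"

text \<open>Vertices 1 .. 2^(k+1)-1, root 1, children of i are 2i and 2i+1; leaves 2^k .. 2^(k+1)-1.\<close>
definition tree_verts :: "nat \<Rightarrow> nat set" where
  "tree_verts k = {1..<2^(Suc k)}"

definition leaves :: "nat \<Rightarrow> nat set" where
  "leaves k = {2^k..<2^(Suc k)}"

definition tree_adj :: "nat \<Rightarrow> nat \<Rightarrow> nat \<Rightarrow> bool" where
  "tree_adj k u v \<longleftrightarrow> u \<in> tree_verts k \<and> v \<in> tree_verts k \<and>
     (v = 2*u \<or> v = 2*u+1 \<or> u = 2*v \<or> u = 2*v+1)"

definition cubic_graph_on :: "nat set \<Rightarrow> (nat \<Rightarrow> nat \<Rightarrow> bool) \<Rightarrow> bool" where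
  "cubic_graph_on L E \<longleftrightarrow>
     (\<forall>u v. E u v \<longrightarrow> u \<in> L \<and> v \<in> L) \<and>
     (\<forall>u v. E u v \<longrightarrow> E v u) \<and>
     (\<forall>u. \<not> E u u) \<and>
     (\<forall>u\<in>L. card {v. E u v} = 3)"

definition G_adj :: "nat \<Rightarrow> (nat \<Rightarrow> nat \<Rightarrow> bool) \<Rightarrow> nat \<Rightarrow> nat \<Rightarrow> bool" where
  "G_adj k E u v \<longleftrightarrow> tree_adj k u v \<or> E u v"

end

theory Submission
  imports Defs
begin

lemma tp_nonneg: "trans_prob V adj u v \<ge> 0"
  by (simp add: trans_prob_def)

lemma tp_eq: "trans_prob V adj u w = (if w \<in> {w\<in>V. adj u w} then 1 / real (deg V adj u) else 0)"
  by (simp add: trans_prob_def)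

lemma tp_sum_le:
  assumes "finite V"
  shows "(\<Sum>w\<in>V. trans_prob V adj u w) \<le> 1"
proof -
  have "(\<Sum>w\<in>V. trans_prob V adj u w) = (\<Sum>w\<in>V. if adj u w then 1 / real (deg V adj u) else 0)"
    by (intro sum.cong) (auto simp: trans_prob_def)
  also have "\<dots> = (\<Sum>w\<in>{w\<in>V. adj u w}. 1 / real (deg V adj u))"
    by (simp only: sum.inter_filter[OF assms])
  also have "\<dots> = real (card {w\<in>V. adj u w}) / real (deg V adj u)" by simp
  also have "\<dots> \<le> 1" by (simp add: deg_def)
  finally show ?thesis .
qed

lemma hit_nonneg: "hit_at V adj n S y z \<ge> 0"
  by (induction n arbitrary: y) (auto intro!: sum_nonneg mult_nonneg_nonneg simp: tp_nonneg)

lemma hit_in_S: "y \<in> S \<Longrightarrow> hit_at V adj n S y z = (if n = 0 \<and> y = z then 1 else 0)"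
  by (cases n) auto

lemma hit_partial_le:
  assumes "finite V"
  shows "(\<Sum>n<N. hit_at V adj n S y z) \<le> 1"
proof (induction N arbitrary: y)
  case 0 then show ?case by simp
next
  case (Suc N)
  show ?case
  proof (cases "y \<in> S")
    case True then show ?thesis by (simp only: sum.lessThan_Suc_shift) (simp add: hit_in_S)
  next
    case False
    have "(\<Sum>n<Suc N. hit_at V adj n S y z) = (\<Sum>n<N. \<Sum>w\<in>V. trans_prob V adj y w * hit_at V adj n S w z)"
      using False by (simp only: sum.lessThan_Suc_shift) simp
    also have "\<dots> = (\<Sum>w\<in>V. trans_prob V adj y w * (\<Sum>n<N. hit_at V adj n S w z))"
      by (simp add: sum.swap[of _ "{..<N}"] sum_distrib_left)
    also have "\<dots> \<le> (\<Sum>w\<in>V. trans_prob V adj y w * 1)"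
      by (intro sum_mono mult_left_mono Suc tp_nonneg)
    also have "\<dots> \<le> 1" using tp_sum_le[OF assms] by simp
    finally show ?thesis .
  qed
qed

lemma hit_summable:
  assumes "finite V"
  shows "summable (\<lambda>n. hit_at V adj n S y z)"
  by (rule summableI_nonneg_bounded[where x=1]) (auto simp: hit_nonneg hit_partial_le[OF assms])

lemma H_nonneg:
  assumes "finite V"
  shows "harmonic_from V adj S y z \<ge> 0"
  unfolding harmonic_from_def by (rule suminf_nonneg[OF hit_summable[OF assms]]) (simp add: hit_nonneg)

lemma H_in_S:
  assumes "y \<in> S"
  shows "harmonic_from V adj S y z = (if y = z then 1 else 0)"
proof -
  have "(\<lambda>n. hit_at V adj n S y z) = (\<lambda>n. if n = 0 then (if y = z then 1 else 0) else 0)"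
    using assms by (auto simp: fun_eq_iff hit_in_S)
  then show ?thesis unfolding harmonic_from_def
    using sums_single[of 0 "\<lambda>_. if y = z then 1 else (0::real)"] sums_unique by fastforce
qed

lemma H_step:
  assumes "finite V" "y \<notin> S"
  shows "harmonic_from V adj S y z = (\<Sum>w\<in>V. trans_prob V adj y w * harmonic_from V adj S w z)"
proof -
  let ?f = "\<lambda>n. hit_at V adj n S y z"
  have s: "summable ?f" by (rule hit_summable[OF assms(1)])
  have "suminf ?f = ?f 0 + (\<Sum>n. ?f (Suc n))" using suminf_split_head[OF s] by simp
  also have "?f 0 = 0" using assms by simp
  also have "(\<Sum>n. ?f (Suc n)) = (\<Sum>n. \<Sum>w\<in>V. trans_prob V adj y w * hit_at V adj n S w z)"
    using assms by simp
  also have "\<dots> = (\<Sum>w\<in>V. \<Sum>n. trans_prob V adj y w * hit_at V adj n S w z)"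
    by (rule suminf_sum) (intro summable_mult hit_summable[OF assms(1)])
  also have "\<dots> = (\<Sum>w\<in>V. trans_prob V adj y w * harmonic_from V adj S w z)"
    unfolding harmonic_from_def by (intro sum.cong refl suminf_mult hit_summable[OF assms(1)])
  finally show ?thesis unfolding harmonic_from_def by simp
qed


fun dep :: "nat \<Rightarrow> nat" where
  "dep y = (if y \<le> 1 then 0 else Suc (dep (y div 2)))"

declare dep.simps[simp del]

lemma dep_range: "2^j \<le> y \<Longrightarrow> y < 2^(Suc j) \<Longrightarrow> dep y = j"
proof (induction j arbitrary: y)
  case 0 then show ?case by (simp add: dep.simps)
next
  case (Suc j)
  have "(1::nat) \<le> 2^j" by simp
  then have "(2::nat) \<le> 2^Suc j" by simp
  then have "y \<ge> 2" using Suc.prems(1) by linarith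
  moreover have "dep (y div 2) = j" using Suc.prems by (intro Suc.IH) auto
  ultimately show ?case by (subst dep.simps) simp
qed

lemma dep_double: "i \<ge> 1 \<Longrightarrow> dep (2*i) = Suc (dep i)"
  by (subst dep.simps) simp

lemma dep_double1: "i \<ge> 1 \<Longrightarrow> dep (2*i+1) = Suc (dep i)"
  by (subst dep.simps) simp

lemma dep_half: "i \<ge> 2 \<Longrightarrow> dep i = Suc (dep (i div 2))"
  by (subst dep.simps) simp

lemma dep_sum: "(\<Sum>y\<in>{1..<2^n}. (1/2::real)^dep y) = real n"
proof (induction n)
  case 0 then show ?case by simp
next
  case (Suc n)
  have "(\<Sum>y\<in>{1..<2^Suc n}. (1/2::real)^dep y) = (\<Sum>y\<in>{1..<2^n}. (1/2::real)^dep y) + (\<Sum>y\<in>{2^n..<2^Suc n}. (1/2::real)^dep y)"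
    by (rule sum.atLeastLessThan_concat[symmetric]) auto
  also have "(\<Sum>y\<in>{2^n..<2^Suc n}. (1/2::real)^dep y) = (\<Sum>y\<in>{2^n..<(2::nat)^Suc n}. (1/2::real)^n)"
  proof (intro sum.cong refl)
    fix y assume "y \<in> {2^n..<(2::nat)^Suc n}"
    then have "dep y = n" by (intro dep_range) auto
    then show "(1/2::real)^dep y = (1/2)^n" by simp
  qed
  also have "\<dots> = real (2^n) * (1/2::real)^n" by simp
  also have "\<dots> = 1" by (simp add: power_one_over)
  finally show ?case using Suc.IH by simp
qed

lemma nbr_int:
  assumes "cubic_graph_on (leaves k) E" "2 \<le> i" "i < 2^k"
  shows "{w \<in> tree_verts k. G_adj k E i w} = {i div 2, 2*i, 2*i+1}"
proof -
  have nE: "\<not> E i w" for w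
  proof
    assume "E i w" then have "i \<in> leaves k" using assms(1) unfolding cubic_graph_on_def by blast
    then show False using assms(3) by (simp add: leaves_def)
  qed
  show ?thesis using assms by (auto simp: G_adj_def tree_adj_def tree_verts_def nE)
qed

lemma distinct3: "2 \<le> (i::nat) \<Longrightarrow> i div 2 \<noteq> 2*i \<and> i div 2 \<noteq> 2*i+1 \<and> 2*i \<noteq> 2*i+1"
  by presburger

lemma deg_int:
  assumes "cubic_graph_on (leaves k) E" "2 \<le> i" "i < 2^k"
  shows "deg (tree_verts k) (G_adj k E) i = 3"
  using distinct3[OF assms(2)] unfolding deg_def nbr_int[OF assms] by auto

lemma avg_int:
  assumes "cubic_graph_on (leaves k) E" "2 \<le> i" "i < 2^k"
  shows "(\<Sum>w\<in>tree_verts k. trans_prob (tree_verts k) (G_adj k E) i w * f w) = (f (i div 2) + f (2*i) + f (2*i+1)) / 3"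
proof -
  let ?N = "{w \<in> tree_verts k. G_adj k E i w}"
  have fin: "finite (tree_verts k)" by (simp add: tree_verts_def)
  have "(\<Sum>w\<in>tree_verts k. trans_prob (tree_verts k) (G_adj k E) i w * f w) = (\<Sum>w\<in>tree_verts k. if w \<in> ?N then f w / 3 else 0)"
    by (intro sum.cong refl) (simp only: tp_eq deg_int[OF assms], simp)
  also have "\<dots> = (\<Sum>w\<in>tree_verts k \<inter> ?N. f w / 3)" by (simp only: sum.inter_restrict[OF fin])
  also have "tree_verts k \<inter> ?N = {i div 2, 2*i, 2*i+1}" using nbr_int[OF assms] by auto
  also have "(\<Sum>w\<in>{i div 2, 2*i, 2*i+1}. f w / 3) = (f (i div 2) + f (2*i) + f (2*i+1)) / 3"
    using distinct3[OF assms(2)] by (simp add: add_divide_distrib)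
  finally show ?thesis .
qed

lemma deg_le6:
  assumes "cubic_graph_on (leaves k) E"
  shows "deg (tree_verts k) (G_adj k E) v \<le> 6"
proof -
  have fE: "finite {w. E v w} \<and> card {w. E v w} \<le> 3"
  proof (cases "v \<in> leaves k")
    case True
    then have "card {w. E v w} = 3" using assms by (simp add: cubic_graph_on_def)
    then show ?thesis using card.infinite by fastforce
  next
    case False
    then have "{w. E v w} = {}" using assms by (auto simp: cubic_graph_on_def)
    then show ?thesis by simp
  qed
  have sub: "{w \<in> tree_verts k. G_adj k E v w} \<subseteq> {v div 2, 2*v, 2*v+1} \<union> {w. E v w}"
    by (auto simp: G_adj_def tree_adj_def)
  have c3: "card {v div 2, 2*v, 2*v+1} \<le> 3"
    by (simp add: card_insert_if)
  have "deg (tree_verts k) (G_adj k E) v \<le> card ({v div 2, 2*v, 2*v+1} \<union> {w. E v w})"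
    unfolding deg_def using fE by (intro card_mono sub) auto
  also have "\<dots> \<le> card {v div 2, 2*v, 2*v+1} + card {w. E v w}" by (rule card_Un_le)
  also have "\<dots> \<le> 6" using c3 fE by linarith
  finally show ?thesis .
qed

lemma deg_root:
  assumes "cubic_graph_on (leaves k) E" "k \<ge> 1"
  shows "deg (tree_verts k) (G_adj k E) 1 \<ge> 1"
proof -
  have "(2::nat) ^ 2 \<le> 2 ^ Suc k" by (rule power_increasing) (use assms(2) in auto)
  then have "(2::nat) ^ Suc k \<ge> 4" by simp
  then have "2 \<in> {w \<in> tree_verts k. G_adj k E 1 w}"
    by (auto simp: G_adj_def tree_adj_def tree_verts_def)
  moreover have "finite {w \<in> tree_verts k. G_adj k E 1 w}" by (simp add: tree_verts_def)
  ultimately have "card {w \<in> tree_verts k. G_adj k E 1 w} > 0" by (auto simp: card_gt_0_iff)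
  then show ?thesis unfolding deg_def by simp
qed

lemma main_bound:
  assumes k1: "k \<ge> 1" and cub: "cubic_graph_on (leaves k) E"
  shows "harmonic_stat (tree_verts k) (G_adj k E) (insert 1 (leaves k)) 1
      \<ge> (1/48) * real k / real (card (insert (1::nat) (leaves k)))"
proof -
  define V where "V = tree_verts k"
  define adj where "adj = G_adj k E"
  define S where "S = insert (1::nat) (leaves k)"
  define I where "I = {2..<(2::nat)^k}"
  define H where "H y = harmonic_from V adj S y 1" for y
  define b where "b = (1/2::real)^k"
  define F where "F y = (1/2::real)^dep y - b" for y
  define D where "D y = H y - F y" for y
  have finV: "finite V" by (simp add: V_def tree_verts_def)
  have pk2: "(2::nat) \<le> 2^k" using k1
    by (metis power_increasing power_one_right zero_less_numeral Suc_leI le_refl numeral_2_eq_2 one_le_numeral)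
  have pS: "(2::nat)^Suc k = 2 * 2^k" by simp
  have IV: "I \<subseteq> V" by (auto simp: I_def V_def tree_verts_def)
  have oneV: "1 \<in> V" using pk2 by (simp add: V_def tree_verts_def)
  have oneI: "1 \<notin> I" by (simp add: I_def)
  have IS: "y \<in> I \<Longrightarrow> y \<notin> S" for y using pk2 by (auto simp: I_def S_def leaves_def)
  have Hnn: "H y \<ge> 0" for y unfolding H_def by (rule H_nonneg[OF finV])
  have Hharm: "H i = (H (i div 2) + H (2*i) + H (2*i+1)) / 3" if "i \<in> I" for i
  proof -
    have i2: "2 \<le> i" "i < 2^k" using that by (auto simp: I_def)
    have "H i = (\<Sum>w\<in>V. trans_prob V adj i w * H w)"
      unfolding H_def by (rule H_step[OF finV IS[OF that]])
    also have "\<dots> = (H (i div 2) + H (2*i) + H (2*i+1)) / 3"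
      unfolding V_def adj_def by (rule avg_int[OF cub i2])
    finally show ?thesis .
  qed
  have Fharm: "F i = (F (i div 2) + F (2*i) + F (2*i+1)) / 3" if "i \<in> I" for i
  proof -
    have i2: "2 \<le> i" using that by (auto simp: I_def)
    define d where "d = dep (i div 2)"
    have "dep i = Suc d" unfolding d_def by (rule dep_half[OF i2])
    moreover have "dep (2*i) = Suc (dep i)" "dep (2*i+1) = Suc (dep i)"
      using i2 dep_double[of i] dep_double1[of i] by auto
    ultimately show ?thesis unfolding F_def d_def[symmetric] by (simp add: field_simps)
  qed
  have bnd: "D y \<ge> 0" if "y \<in> V" "y \<notin> I" for y
  proof -
    have "y = 1 \<or> (2^k \<le> y \<and> y < 2^Suc k)" using that by (auto simp: V_def I_def tree_verts_def)
    then show ?thesis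
    proof
      assume "y = 1"
      moreover have "H 1 = 1" unfolding H_def by (simp add: H_in_S S_def)
      moreover have "dep 1 = 0" by (simp add: dep.simps)
      ultimately show ?thesis by (simp add: D_def F_def b_def)
    next
      assume yl: "2^k \<le> y \<and> y < 2^Suc k"
      then have "dep y = k" using dep_range by blast
      moreover have "y \<noteq> 1" using yl pk2 by linarith
      moreover have "y \<in> S" using yl by (simp add: S_def leaves_def)
      ultimately show ?thesis by (simp add: D_def F_def b_def H_def H_in_S)
    qed
  qed
  have HF: "\<forall>y\<in>I. F y \<le> H y"
  proof (rule ccontr)
    assume "\<not> (\<forall>y\<in>I. F y \<le> H y)"
    then obtain y0 where y0: "y0 \<in> I" "D y0 < 0" by (auto simp: D_def)
    have finI: "finite I" by (simp add: I_def)
    define m where "m = Min (D ` I)"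
    have mle: "m \<le> D y" if "y \<in> I" for y unfolding m_def using finI that by simp
    have mneg: "m < 0" using mle[OF y0(1)] y0(2) by linarith
    have min_in: "m \<in> D ` I" unfolding m_def using finI y0(1) by (intro Min_in) auto
    define A where "A = {y \<in> I. D y = m}"
    have finA: "finite A" "A \<noteq> {}" using finI min_in by (auto simp: A_def)
    define i where "i = Max A"
    have iA: "i \<in> A" unfolding i_def using finA by (rule Max_in)
    have imax: "y \<in> A \<Longrightarrow> y \<le> i" for y unfolding i_def using finA by simp
    have iI: "i \<in> I" and Di: "D i = m" using iA by (auto simp: A_def)
    have allV: "D w \<ge> m" if "w \<in> V" for w
      using mle bnd[OF that] mneg by (cases "w \<in> I") auto
    have i2: "2 \<le> i" "i < 2^k" using iI by (auto simp: I_def)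
    have inV: "i div 2 \<in> V" "2*i \<in> V" "2*i+1 \<in> V" using i2 by (auto simp: V_def tree_verts_def)
    have "D i = (D (i div 2) + D (2*i) + D (2*i+1)) / 3"
      unfolding D_def using Hharm[OF iI] Fharm[OF iI] by simp
    then have "3 * D i = D (i div 2) + D (2*i) + D (2*i+1)" by simp
    then have D2: "D (2*i) = m" using allV[OF inV(1)] allV[OF inV(2)] allV[OF inV(3)] Di by linarith
    show False
    proof (cases "2*i \<in> I")
      case True
      then have "2*i \<in> A" using D2 by (simp add: A_def)
      then show False using imax i2 by fastforce
    next
      case False
      then show False using bnd[OF inV(2) False] D2 mneg by linarith
    qed
  qed
  have sumall: "(\<Sum>y\<in>{1..<2^k}. (1/2::real)^dep y) = real k" by (rule dep_sum)
  have ins: "{1..<(2::nat)^k} = insert 1 I" using pk2 by (auto simp: I_def)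
  have dep1: "dep (Suc 0) = 0" by (simp add: dep.simps)
  have sumI: "(\<Sum>y\<in>I. (1/2::real)^dep y) = real k - 1"
    using sumall unfolding ins using oneI by (simp add: I_def dep1)
  have cardI: "real (card I) \<le> 2^k" by (simp add: I_def)
  have cb: "real (card I) * b \<le> 1"
  proof -
    have "real (card I) * b \<le> 2^k * b" using cardI by (simp add: b_def)
    also have "\<dots> = 1" by (simp add: b_def power_one_over)
    finally show ?thesis .
  qed
  have sumF: "(\<Sum>y\<in>I. F y) \<ge> real k - 2"
  proof -
    have "(\<Sum>y\<in>I. F y) = (real k - 1) - real (card I) * b"
      unfolding F_def by (simp add: sum_subtractf sumI)
    then show ?thesis using cb by linarith
  qed
  define T where "T = (\<Sum>w\<in>V. real (deg V adj w))"
  have degI: "deg V adj y = 3" if "y \<in> I" for y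
    using that unfolding V_def adj_def I_def by (intro deg_int[OF cub]) auto
  have deg1: "real (deg V adj 1) \<ge> 1" unfolding V_def adj_def using deg_root[OF cub k1] by simp
  have cardV: "card V = 2^Suc k - 1" by (simp add: V_def tree_verts_def)
  have Tle: "T \<le> 12 * 2^k"
  proof -
    have "T \<le> (\<Sum>w\<in>V. 6)" unfolding T_def V_def adj_def using deg_le6[OF cub] by (intro sum_mono) simp
    also have "\<dots> = 6 * real (card V)" by simp
    also have "\<dots> \<le> 12 * 2^k" using cardV by simp
    finally show ?thesis .
  qed
  have Tge: "T \<ge> 1"
  proof -
    have "real (deg V adj 1) \<le> T" unfolding T_def using finV oneV
      by (intro member_le_sum) auto
    then show ?thesis using deg1 by linarith
  qed
  define N where "N = (\<Sum>y\<in>V. real (deg V adj y) * H y)"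
  have hs: "harmonic_stat V adj S 1 = N / T"
    unfolding harmonic_stat_def stationary_def N_def T_def H_def
    by (simp add: sum_divide_distrib)
  have "N \<ge> (\<Sum>y\<in>insert 1 I. real (deg V adj y) * H y)"
    unfolding N_def using finV IV oneV Hnn by (intro sum_mono2) auto
  also have "(\<Sum>y\<in>insert 1 I. real (deg V adj y) * H y) = real (deg V adj 1) * H 1 + (\<Sum>y\<in>I. 3 * H y)"
    using oneI by (simp add: I_def degI)
  finally have N1: "N \<ge> real (deg V adj 1) * H 1 + (\<Sum>y\<in>I. 3 * H y)" .
  have H1: "H 1 = 1" unfolding H_def by (simp add: H_in_S S_def)
  have s3: "(\<Sum>y\<in>I. 3 * H y) \<ge> 3 * (real k - 2)"
  proof -
    have "(\<Sum>y\<in>I. 3 * H y) \<ge> (\<Sum>y\<in>I. 3 * F y)" using HF by (intro sum_mono) auto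
    then show ?thesis using sumF by (simp add: sum_distrib_left[symmetric])
  qed
  have s0: "(\<Sum>y\<in>I. 3 * H y) \<ge> 0" using Hnn by (intro sum_nonneg) auto
  have Nk: "N \<ge> real k / 4"
  proof -
    have "N \<ge> 1 + (\<Sum>y\<in>I. 3 * H y)" using N1 deg1 H1 by simp
    then show ?thesis using s3 s0 by (cases "k \<le> 4") auto
  qed
  have cardS: "real (card S) \<ge> 2^k"
  proof -
    have "card S = Suc (card (leaves k))" using pk2 by (simp add: S_def leaves_def)
    then show ?thesis by (simp add: leaves_def)
  qed
  have P: "(0::real) < 2^k" by simp
  have "(1/48) * real k / real (card S) \<le> (1/48) * real k / 2^k"
  proof -
    have "real (card S) > 0" using cardS P by linarith
    then have "0 < real (card S) * 2^k" using P by simp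
    then show ?thesis using cardS by (intro divide_left_mono) auto
  qed
  also have "\<dots> = (real k / 4) / (12 * 2^k)" by simp
  also have "\<dots> \<le> N / (12 * 2^k)" using Nk P by (intro divide_right_mono) auto
  also have "\<dots> \<le> N / T" using Tle Tge Nk by (intro divide_left_mono) auto
  finally show ?thesis using hs unfolding V_def adj_def S_def by simp
qed

theorem mainTheorem6:
  shows "\<exists>c>0. \<forall>k\<ge>1. \<forall>E. cubic_graph_on (leaves k) E \<longrightarrow>
    harmonic_stat (tree_verts k) (G_adj k E) (insert 1 (leaves k)) 1
      \<ge> c * real k / real (card (insert (1::nat) (leaves k)))"
proof (rule exI[of _ "1/48"], intro conjI allI impI)
  show "(0::real) < 1/48" by simp
next
  fix k :: nat and E
  assume "1 \<le> k" "cubic_graph_on (leaves k) E"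
  then show "harmonic_stat (tree_verts k) (G_adj k E) (insert 1 (leaves k)) 1
      \<ge> 1/48 * real k / real (card (insert (1::nat) (leaves k)))"
    by (rule main_bound)
qed

end
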